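(* Let $G$ be the Boolean group of all finite subsets of $\mathbb{Z}$ with symmetric difference as the group operation (identity $\emptyset$), and let $$A=G\setminus\{\{x,y\}: x,y\in\mathbb{Z},\ 0\ne x-y\in\{z^3:z\in\mathbb{Z}\}\}.$$ Then: (i) $A$ is a Ramsey $\vec m$-product subset of $G$ for every $\vec m=(m_1,\dots,m_k)\in(2\mathbb{Z}+1)^k$ with $k\ge2$; (ii) there is no large subset $B$ of $G$ with $BB^{-1}\subseteq A$; (iii) $A$ is not a neighbourhood of the identity in any totally bounded group topology on $G$.
   Context: A subset $A$ of a group $G$ is a Ramsey $\vec m$-product subset, for $\vec m\in\mathbb{Z}^k$, if every infinite $X\subseteq G$ contains pairwise distinct $x_1,\dots,x_k\in X$ with $x_{\sigma(1)}^{m_1}\cdots x_{\sigma(k)}^{m_k}\in A$ for every $\sigma\in S_k$. A subset $B$ of $G$ is large if $G=FB$ for some finite $F\subseteq G$. *)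

theory Defs
  imports "HOL-Analysis.Analysis" "HOL-Algebra.Group" "HOL-Combinatorics.Permutations"
begin

text \<open>Product x_{sigma(1)}^{m_1} ... x_{sigma(k)}^{m_k}, with k = length ms, indices 0..k-1.\<close>
definition perm_power_prod :: "('a, 'b) monoid_scheme \<Rightarrow> int list \<Rightarrow> (nat \<Rightarrow> 'a) \<Rightarrow> (nat \<Rightarrow> nat) \<Rightarrow> 'a" where
  "perm_power_prod G ms x \<sigma> =
     foldr (\<lambda>i acc. (x (\<sigma> i) [^]\<^bsub>G\<^esub> (ms ! i)) \<otimes>\<^bsub>G\<^esub> acc) [0..<length ms] \<one>\<^bsub>G\<^esub>"

definition ramsey_product_subset :: "('a, 'b) monoid_scheme \<Rightarrow> int list \<Rightarrow> 'a set \<Rightarrow> bool" where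
  "ramsey_product_subset G ms A \<longleftrightarrow> A \<subseteq> carrier G \<and>
     (\<forall>X. X \<subseteq> carrier G \<and> infinite X \<longrightarrow>
        (\<exists>x. x ` {..<length ms} \<subseteq> X \<and> inj_on x {..<length ms} \<and>
             (\<forall>\<sigma>. \<sigma> permutes {..<length ms} \<longrightarrow> perm_power_prod G ms x \<sigma> \<in> A)))"

definition large_subset :: "('a, 'b) monoid_scheme \<Rightarrow> 'a set \<Rightarrow> bool" where
  "large_subset G B \<longleftrightarrow> B \<subseteq> carrier G \<and>
     (\<exists>F. finite F \<and> F \<subseteq> carrier G \<and> carrier G = (\<Union>f\<in>F. (\<lambda>b. f \<otimes>\<^bsub>G\<^esub> b) ` B))"

definition group_topology :: "('a, 'b) monoid_scheme \<Rightarrow> 'a topology \<Rightarrow> bool" where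
  "group_topology G T \<longleftrightarrow> topspace T = carrier G \<and>
     continuous_map (prod_topology T T) T (\<lambda>(x, y). x \<otimes>\<^bsub>G\<^esub> y) \<and>
     continuous_map T T (\<lambda>x. inv\<^bsub>G\<^esub> x)"

definition totally_bounded_group_topology :: "('a, 'b) monoid_scheme \<Rightarrow> 'a topology \<Rightarrow> bool" where
  "totally_bounded_group_topology G T \<longleftrightarrow> group_topology G T \<and>
     (\<forall>U. openin T U \<and> \<one>\<^bsub>G\<^esub> \<in> U \<longrightarrow>
        (\<exists>F. finite F \<and> F \<subseteq> carrier G \<and> carrier G = (\<Union>f\<in>F. (\<lambda>u. f \<otimes>\<^bsub>G\<^esub> u) ` U)))"

definition nhd_of_identity :: "('a, 'b) monoid_scheme \<Rightarrow> 'a topology \<Rightarrow> 'a set \<Rightarrow> bool" where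
  "nhd_of_identity G T A \<longleftrightarrow> (\<exists>U. openin T U \<and> \<one>\<^bsub>G\<^esub> \<in> U \<and> U \<subseteq> A)"

definition BoolZ :: "int set monoid" where
  "BoolZ = \<lparr>carrier = {S. finite S}, mult = (\<lambda>S T. (S - T) \<union> (T - S)), one = {}\<rparr>"

definition cubeA :: "int set set" where
  "cubeA = carrier BoolZ - {{x, y} | x y. x - y \<noteq> 0 \<and> (\<exists>z::int. x - y = z ^ 3)}"

end

theory Submission
  imports Defs
begin


type_synonym pvtri = "int \<times> int \<times> int"

definition pvev :: "pvtri \<Rightarrow> int \<Rightarrow> int" where
  "pvev p n = fst p * n + fst (snd p) * n^2 + snd (snd p) * n^3"
definition pvdeg :: "pvtri \<Rightarrow> nat" where
  "pvdeg p = (if snd (snd p) \<noteq> 0 then 3 else if fst (snd p) \<noteq> 0 then 2 else if fst p \<noteq> 0 then 1 else 0)"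
definition pvlc :: "pvtri \<Rightarrow> int" where
  "pvlc p = (if snd (snd p) \<noteq> 0 then snd (snd p) else if fst (snd p) \<noteq> 0 then fst (snd p) else fst p)"
definition pvsub :: "pvtri \<Rightarrow> pvtri \<Rightarrow> pvtri" where
  "pvsub p q = (fst p - fst q, fst (snd p) - fst (snd q), snd (snd p) - snd (snd q))"
definition pvshift :: "int \<Rightarrow> pvtri \<Rightarrow> pvtri" where
  "pvshift m p = (fst p + 2 * fst (snd p) * m + 3 * snd (snd p) * m^2, fst (snd p) + 3 * snd (snd p) * m, snd (snd p))"
definition pvLset :: "pvtri set \<Rightarrow> nat \<Rightarrow> int set" where
  "pvLset P e = pvlc ` {p \<in> P. pvdeg p = e}"
definition pvwt :: "pvtri set \<Rightarrow> nat \<times> nat \<times> nat" where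
  "pvwt P = (card (pvLset P 3), card (pvLset P 2), card (pvLset P 1))"
definition pvLR :: "((nat \<times> nat \<times> nat) \<times> (nat \<times> nat \<times> nat)) set" where
  "pvLR = less_than <*lex*> (less_than <*lex*> less_than)"

lemma wf_LR: "wf pvLR" unfolding pvLR_def by (intro wf_lex_prod wf_less_than)

lemma ev_sub[simp]: "pvev (pvsub p q) n = pvev p n - pvev q n"
  by (simp add: pvev_def pvsub_def algebra_simps)

lemma ev_shift: "pvev (pvshift m p) n = pvev p (n + m) - pvev p m"
  by (simp add: pvev_def pvshift_def power2_eq_square power3_eq_cube algebra_simps)

lemma ev_zero[simp]: "pvev (0,0,0) n = 0" by (simp add: pvev_def)

lemma deg_shift[simp]: "pvdeg (pvshift m p) = pvdeg p" and lc_shift[simp]: "pvlc (pvshift m p) = pvlc p"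
proof -
  obtain a b c where p: "p = (a,b,c)" by (cases p) auto
  show "pvdeg (pvshift m p) = pvdeg p" unfolding p pvdeg_def pvshift_def by auto
  show "pvlc (pvshift m p) = pvlc p" unfolding p pvlc_def pvshift_def by auto
qed

lemma sub_hi:
  assumes "pvdeg p1 < pvdeg s"
  shows "pvdeg (pvsub s p1) = pvdeg s \<and> pvlc (pvsub s p1) = pvlc s"
proof -
  obtain a b c where p: "s = (a,b,c)" by (cases s) auto
  obtain a1 b1 c1 where q: "p1 = (a1,b1,c1)" by (cases p1) auto
  show ?thesis using assms unfolding p q pvdeg_def pvlc_def pvsub_def
    by (simp split: if_split_asm)
qed

lemma sub_eq:
  assumes "pvdeg p1 = pvdeg s"
  shows "pvdeg (pvsub s p1) \<le> pvdeg p1 \<and> (pvdeg (pvsub s p1) = pvdeg p1 \<and> p1 \<noteq> (0,0,0) \<longrightarrow> pvlc s \<noteq> pvlc p1 \<and> pvlc (pvsub s p1) = pvlc s - pvlc p1)"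
proof -
  obtain a b c where p: "s = (a,b,c)" by (cases s) auto
  obtain a1 b1 c1 where q: "p1 = (a1,b1,c1)" by (cases p1) auto
  show ?thesis using assms unfolding p q pvdeg_def pvlc_def pvsub_def
    by (simp split: if_split_asm)
qed

lemma wt_dec:
  assumes fP: "finite P" and p1: "p1 \<in> P" "p1 \<noteq> (0,0,0)" and mn: "\<forall>p\<in>P. pvdeg p1 \<le> pvdeg p"
    and fQ: "finite Q"
    and Q: "\<forall>q\<in>Q. \<exists>p\<in>P. \<exists>m. q = pvsub p p1 \<or> q = pvsub (pvshift m p) p1"
  shows "(pvwt Q, pvwt P) \<in> pvLR"
proof -
  define d where "d = pvdeg p1"
  have d13: "1 \<le> d" "d \<le> 3" using p1(2) unfolding d_def pvdeg_def by (cases p1) (auto split: if_splits)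
  have fL: "finite (pvLset P e)" for e using fP unfolding pvLset_def by auto
  have fLQ: "finite (pvLset Q e)" for e using fQ unfolding pvLset_def by auto
  have hi: "pvLset Q e \<subseteq> pvLset P e" if "e > d" for e
  proof
    fix l assume "l \<in> pvLset Q e"
    then obtain q where q: "q \<in> Q" "pvdeg q = e" "l = pvlc q" unfolding pvLset_def by auto
    then obtain p m where pm: "p \<in> P" "q = pvsub p p1 \<or> q = pvsub (pvshift m p) p1" using Q by blast
    then obtain s where s: "q = pvsub s p1" "pvdeg s = pvdeg p" "pvlc s = pvlc p" by (metis deg_shift lc_shift)
    have "pvdeg p1 \<le> pvdeg s" using mn pm s by auto
    moreover have "pvdeg p1 \<noteq> pvdeg s"
      using sub_eq[of p1 s] s q that d_def by auto
    ultimately have "pvdeg p1 < pvdeg s" by simp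
    from sub_hi[OF this] s q have "pvdeg p = e" "l = pvlc p" by auto
    then show "l \<in> pvLset P e" using pm unfolding pvLset_def by auto
  qed
  have eqd: "pvLset Q d \<subseteq> (\<lambda>l. l - pvlc p1) ` (pvLset P d - {pvlc p1})"
  proof
    fix l assume "l \<in> pvLset Q d"
    then obtain q where q: "q \<in> Q" "pvdeg q = d" "l = pvlc q" unfolding pvLset_def by auto
    then obtain p m where pm: "p \<in> P" "q = pvsub p p1 \<or> q = pvsub (pvshift m p) p1" using Q by blast
    then obtain s where s: "q = pvsub s p1" "pvdeg s = pvdeg p" "pvlc s = pvlc p" by (metis deg_shift lc_shift)
    have "pvdeg p1 \<le> pvdeg s" using mn pm s by auto
    moreover have "\<not> pvdeg p1 < pvdeg s"
      using sub_hi[of p1 s] s q d_def by auto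
    ultimately have e: "pvdeg p1 = pvdeg s" by simp
    from sub_eq[OF this] s q p1 d_def have "pvlc p \<noteq> pvlc p1" "l = pvlc p - pvlc p1" by auto
    then show "l \<in> (\<lambda>l. l - pvlc p1) ` (pvLset P d - {pvlc p1})"
      using pm e s d_def unfolding pvLset_def by auto
  qed
  have "card (pvLset Q d) \<le> card (pvLset P d - {pvlc p1})"
    using card_image_le[of "pvLset P d - {pvlc p1}" "\<lambda>l. l - pvlc p1"] card_mono[OF _ eqd] fL by auto
  also have "\<dots> < card (pvLset P d)"
    using p1 fL[of d] d_def by (intro card_Diff1_less) (auto simp: pvLset_def)
  finally have lt: "card (pvLset Q d) < card (pvLset P d)" .
  have le: "card (pvLset Q e) \<le> card (pvLset P e)" if "e > d" for e
    using card_mono[OF fL hi[OF that]] .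
  show ?thesis
  proof -
    consider "d = 1" | "d = 2" | "d = 3" using d13 by linarith
    then show ?thesis
    proof cases
      case 1
      then show ?thesis using lt le[of 2] le[of 3] unfolding pvwt_def pvLR_def
        by (auto simp: order.order_iff_strict)
    next
      case 2
      then show ?thesis using lt le[of 3] unfolding pvwt_def pvLR_def
        by (auto simp: order.order_iff_strict)
    next
      case 3
      then show ?thesis using lt unfolding pvwt_def pvLR_def by auto
    qed
  qed
qed

definition pvbnd :: "pvtri \<Rightarrow> int \<Rightarrow> int" where
  "pvbnd p N = \<bar>fst p\<bar> * N + \<bar>fst (snd p)\<bar> * N^2 + \<bar>snd (snd p)\<bar> * N^3"

lemma ev_bnd: assumes "\<bar>n\<bar> \<le> N" shows "\<bar>pvev p n\<bar> \<le> pvbnd p N"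
proof -
  obtain a b c where p: "p = (a,b,c)" by (cases p) auto
  have N0: "0 \<le> N" using assms by linarith
  have 1: "\<bar>a * n\<bar> \<le> \<bar>a\<bar> * N" using assms by (simp add: abs_mult mult_left_mono)
  have "\<bar>n\<bar>^2 \<le> N^2" using assms by (intro power_mono) auto
  then have 2: "\<bar>b * n^2\<bar> \<le> \<bar>b\<bar> * N^2" by (simp add: abs_mult mult_left_mono power_abs)
  have "\<bar>n\<bar>^3 \<le> N^3" using assms by (intro power_mono) auto
  then have 3: "\<bar>c * n^3\<bar> \<le> \<bar>c\<bar> * N^3" by (simp add: abs_mult mult_left_mono power_abs)
  show ?thesis unfolding p pvev_def pvbnd_def using 1 2 3 by (simp, linarith)
qed

lemma bnd_nonneg: "0 \<le> N \<Longrightarrow> 0 \<le> pvbnd p N"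
  unfolding pvbnd_def by simp

definition pvgood :: "pvtri set \<Rightarrow> nat \<Rightarrow> int \<Rightarrow> bool" where
  "pvgood P r N \<longleftrightarrow> (\<forall>c::int\<Rightarrow>nat. (\<forall>x. c x < r) \<longrightarrow>
     (\<exists>a n. \<bar>a\<bar> \<le> N \<and> 1 \<le> n \<and> n \<le> N \<and> (\<forall>p\<in>P. c (a + pvev p n) = c a)))"

definition pvfocus :: "pvtri set \<Rightarrow> nat \<Rightarrow> nat \<Rightarrow> int \<Rightarrow> int \<Rightarrow> bool" where
  "pvfocus P r k N M \<longleftrightarrow> (\<forall>c::int\<Rightarrow>nat. (\<forall>x. c x < r) \<longrightarrow>
     (\<exists>a n. \<bar>a\<bar> \<le> M \<and> 1 \<le> n \<and> n \<le> N \<and> (\<forall>p\<in>P. c (a + pvev p n) = c a)) \<or>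
     (\<exists>F ns col. \<bar>F\<bar> \<le> M \<and> (\<forall>i<k. 1 \<le> ns i \<and> ns i \<le> N) \<and>
        (\<forall>i<k. col i < r \<and> (\<forall>p\<in>P. c (F + pvev p (ns i)) = col i)) \<and> inj_on col {..<k}))"

lemma focus0: "pvfocus P r 0 1 0"
  unfolding pvfocus_def by auto

lemma focus_step:
  assumes fP: "finite P" and p1: "p1 \<in> P" "p1 \<noteq> (0,0,0)" and mn: "\<forall>p\<in>P. pvdeg p1 \<le> pvdeg p"
    and IH: "\<And>Q R. (pvwt Q, pvwt P) \<in> pvLR \<Longrightarrow> finite Q \<Longrightarrow> (0,0,0) \<notin> Q \<Longrightarrow> \<exists>N. pvgood Q R N"
    and fk: "pvfocus P r k N M" and N0: "0 \<le> N" and M0: "0 \<le> M"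
  shows "\<exists>N' M'. 0 \<le> N' \<and> 0 \<le> M' \<and> pvfocus P r (Suc k) N' M'"
proof -
  define K where "K = (\<Sum>p\<in>P. pvbnd p N)"
  define W where "W = M + K"
  define LS where "LS = {xs. set xs \<subseteq> {..<r} \<and> length xs = length [-W..W]}"
  have fLS: "finite LS" unfolding LS_def by (rule finite_lists_length_eq) simp
  obtain h where h: "bij_betw h LS {0..<card LS}" using ex_bij_betw_finite_nat[OF fLS] by blast
  define Q where "Q = {q. q \<noteq> (0,0,0) \<and> (\<exists>p\<in>P. q = pvsub p p1 \<or> (\<exists>m\<in>{1..N}. q = pvsub (pvshift m p) p1))}"
  have "Q \<subseteq> (\<lambda>p. pvsub p p1) ` P \<union> (\<lambda>(m,p). pvsub (pvshift m p) p1) ` ({1..N} \<times> P)"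
  proof
    fix q assume "q \<in> Q"
    then obtain p where p: "p \<in> P" "q = pvsub p p1 \<or> (\<exists>m\<in>{1..N}. q = pvsub (pvshift m p) p1)"
      unfolding Q_def by blast
    then show "q \<in> (\<lambda>p. pvsub p p1) ` P \<union> (\<lambda>(m,p). pvsub (pvshift m p) p1) ` ({1..N} \<times> P)"
    proof (elim disjE bexE)
      fix m assume "m \<in> {1..N}" "q = pvsub (pvshift m p) p1"
      then show ?thesis using p(1) by (intro UnI2 rev_image_eqI[of "(m,p)"]) auto
    qed auto
  qed
  then have fQ: "finite Q" by (rule finite_subset) (use fP in auto)
  have "(pvwt Q, pvwt P) \<in> pvLR"
    by (rule wt_dec[OF fP p1 mn fQ]) (auto simp: Q_def)
  from IH[OF this fQ] obtain NQ0 where gQ0: "pvgood Q (card LS) NQ0" by (auto simp: Q_def)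
  define NQ where "NQ = max 0 NQ0"
  have gQ: "pvgood Q (card LS) NQ" using gQ0 unfolding pvgood_def NQ_def
    by (meson max.cobounded2 order_trans)
  have NQ0: "0 \<le> NQ" unfolding NQ_def by simp
  define N' where "N' = N + NQ"
  define M' where "M' = NQ + M + pvbnd p1 NQ"
  have "pvfocus P r (Suc k) N' M'"
    unfolding pvfocus_def
  proof (intro allI impI)
    fix c :: "int \<Rightarrow> nat" assume cr: "\<forall>x. c x < r"
    define pat where "pat y = map (\<lambda>t. c (y + t)) [-W..W]" for y
    have patLS: "pat y \<in> LS" for y unfolding pat_def LS_def using cr by auto
    define C where "C y = h (pat y)" for y
    have "C y < card LS" for y using h patLS[of y] unfolding C_def bij_betw_def by auto
    then obtain x d where xd: "\<bar>x\<bar> \<le> NQ" "1 \<le> d" "d \<le> NQ" and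
      mq: "\<forall>q\<in>Q. C (x + pvev q d) = C x"
      using gQ unfolding pvgood_def by blast
    have key: "c (x + pvev q d + t) = c (x + t)" if "q \<in> Q" "\<bar>t\<bar> \<le> W" for q t
    proof -
      have "h (pat (x + pvev q d)) = h (pat x)" using mq that unfolding C_def by auto
      then have "pat (x + pvev q d) = pat x"
        using h patLS unfolding bij_betw_def inj_on_def by blast
      then have "\<forall>t\<in>set [-W..W]. c (x + pvev q d + t) = c (x + t)"
        unfolding pat_def by (simp add: map_eq_conv)
      then show ?thesis using that(2) by (auto simp: abs_le_iff)
    qed
    have key2: "c (x + pvev (pvsub s p1) d + t) = c (x + t)"
      if "p \<in> P" "s = p \<or> (\<exists>m\<in>{1..N}. s = pvshift m p)" "\<bar>t\<bar> \<le> W" for p s t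
    proof (cases "pvsub s p1 = (0,0,0)")
      case True then show ?thesis by simp
    next
      case False
      then have "pvsub s p1 \<in> Q" unfolding Q_def using that by auto
      then show ?thesis using key that by blast
    qed
    have Kb: "pvbnd p N \<le> K" if "p \<in> P" for p
      unfolding K_def using fP that bnd_nonneg[OF N0] by (intro member_le_sum) auto
    define c' where "c' y = c (x + y)" for y
    have c'r: "\<And>y. c' y < r" using cr unfolding c'_def by auto
    have "(\<exists>a n. \<bar>a\<bar> \<le> M \<and> 1 \<le> n \<and> n \<le> N \<and> (\<forall>p\<in>P. c' (a + pvev p n) = c' a)) \<or>
     (\<exists>F ns col. \<bar>F\<bar> \<le> M \<and> (\<forall>i<k. 1 \<le> ns i \<and> ns i \<le> N) \<and>
        (\<forall>i<k. col i < r \<and> (\<forall>p\<in>P. c' (F + pvev p (ns i)) = col i)) \<and> inj_on col {..<k})"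
      using fk c'r unfolding pvfocus_def by blast
    then
    show "(\<exists>a n. \<bar>a\<bar> \<le> M' \<and> 1 \<le> n \<and> n \<le> N' \<and> (\<forall>p\<in>P. c (a + pvev p n) = c a)) \<or>
      (\<exists>F ns col. \<bar>F\<bar> \<le> M' \<and> (\<forall>i<Suc k. 1 \<le> ns i \<and> ns i \<le> N') \<and>
        (\<forall>i<Suc k. col i < r \<and> (\<forall>p\<in>P. c (F + pvev p (ns i)) = col i)) \<and> inj_on col {..<Suc k})"
    proof (elim disjE exE conjE)
      fix a n assume "\<bar>a\<bar> \<le> M" "1 \<le> n" "n \<le> N" "\<forall>p\<in>P. c' (a + pvev p n) = c' a"
      then show ?thesis
        using xd NQ0 bnd_nonneg[OF NQ0, of p1] unfolding c'_def M'_def N'_def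
        by (intro disjI1 exI[of _ "x + a"] exI[of _ n]) (auto simp: add.assoc)
    next
      fix F ns col assume F: "\<bar>F\<bar> \<le> M" and ns: "\<forall>i<k. 1 \<le> ns i \<and> ns i \<le> N"
        and col: "\<forall>i<k. col i < r \<and> (\<forall>p\<in>P. c' (F + pvev p (ns i)) = col i)"
        and inj: "inj_on col {..<k}"
      show ?thesis
      proof (cases "\<exists>i<k. c (x + F) = col i")
        case True
        then obtain i where i: "i < k" "c (x + F) = col i" by blast
        show ?thesis
          using xd NQ0 bnd_nonneg[OF NQ0, of p1] F ns i col unfolding c'_def M'_def N'_def
          by (intro disjI1 exI[of _ "x + F"] exI[of _ "ns i"]) (auto simp: add.assoc)
      next
        case False
        define F' where "F' = x + F - pvev p1 d"
        define ns' where "ns' i = (if i < k then ns i + d else d)" for i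
        define col' where "col' = col(k := c (x + F))"
        have "\<bar>pvev p1 d\<bar> \<le> pvbnd p1 NQ" using xd by (intro ev_bnd) auto
        then have bF': "\<bar>F'\<bar> \<le> M'" using xd F unfolding F'_def M'_def by linarith
        have bns: "\<forall>i<Suc k. 1 \<le> ns' i \<and> ns' i \<le> N'"
          using ns xd N0 unfolding ns'_def N'_def by (auto simp: less_Suc_eq)
        have cols: "\<forall>i<Suc k. col' i < r \<and> (\<forall>p\<in>P. c (F' + pvev p (ns' i)) = col' i)"
        proof (intro allI impI conjI ballI)
          fix i assume "i < Suc k"
          then show "col' i < r" using col cr unfolding col'_def by (auto simp: less_Suc_eq)
        next
          fix i p assume i: "i < Suc k" and p: "p \<in> P"
          show "c (F' + pvev p (ns' i)) = col' i"
          proof (cases "i < k")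
            case True
            have e: "pvev p (ns i + d) = pvev (pvshift (ns i) p) d + pvev p (ns i)"
              using ev_shift[of "ns i" p d] by (simp add: add.commute)
            have t: "\<bar>F + pvev p (ns i)\<bar> \<le> W"
            proof -
              have "\<bar>pvev p (ns i)\<bar> \<le> pvbnd p N" using ns True by (intro ev_bnd) auto
              then show ?thesis using Kb[OF p] F unfolding W_def by linarith
            qed
            have "c (F' + pvev p (ns' i)) = c (x + pvev (pvsub (pvshift (ns i) p) p1) d + (F + pvev p (ns i)))"
              unfolding F'_def ns'_def using True e by (simp add: algebra_simps)
            also have "\<dots> = c (x + (F + pvev p (ns i)))"
              using ns True p t by (intro key2[of p]) auto
            also have "\<dots> = col i" using col True p unfolding c'_def by auto
            finally show ?thesis using True unfolding col'_def by simp
          next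
            case False
            then have ik: "i = k" using i by simp
            have t: "\<bar>F\<bar> \<le> W"
            proof -
              have "0 \<le> K" unfolding K_def using bnd_nonneg[OF N0] by (intro sum_nonneg) auto
              then show ?thesis using F unfolding W_def by linarith
            qed
            have "c (F' + pvev p (ns' i)) = c (x + pvev (pvsub p p1) d + F)"
              unfolding F'_def ns'_def using ik by (simp add: algebra_simps)
            also have "\<dots> = c (x + F)" using p t by (intro key2[of p]) auto
            finally show ?thesis using ik unfolding col'_def by simp
          qed
        qed
        have "inj_on col' {..<Suc k}"
          using inj False unfolding col'_def inj_on_def by (auto simp: less_Suc_eq)
        then show ?thesis using bF' bns cols by blast
      qed
    qed
  qed
  moreover have "0 \<le> N'" "0 \<le> M'" using N0 M0 NQ0 bnd_nonneg[OF NQ0] unfolding N'_def M'_def by auto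
  ultimately show ?thesis by blast
qed

lemma focus_all:
  assumes fP: "finite P" and p1: "p1 \<in> P" "p1 \<noteq> (0,0,0)" and mn: "\<forall>p\<in>P. pvdeg p1 \<le> pvdeg p"
    and IH: "\<And>Q R. (pvwt Q, pvwt P) \<in> pvLR \<Longrightarrow> finite Q \<Longrightarrow> (0,0,0) \<notin> Q \<Longrightarrow> \<exists>N. pvgood Q R N"
  shows "\<exists>N M. 0 \<le> N \<and> 0 \<le> M \<and> pvfocus P r k N M"
proof (induction k)
  case 0 then show ?case using focus0 by (intro exI[of _ 1] exI[of _ 0]) auto
next
  case (Suc k)
  then obtain N M where "0 \<le> N" "0 \<le> M" "pvfocus P r k N M" by blast
  then show ?case using focus_step[OF fP p1 mn IH] by blast
qed

lemma good_from_focus: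
  assumes "pvfocus P r r N M" shows "pvgood P r (max N M)"
  unfolding pvgood_def
proof (intro allI impI)
  fix c :: "int \<Rightarrow> nat" assume cr: "\<forall>x. c x < r"
  from assms cr have "(\<exists>a n. \<bar>a\<bar> \<le> M \<and> 1 \<le> n \<and> n \<le> N \<and> (\<forall>p\<in>P. c (a + pvev p n) = c a)) \<or>
     (\<exists>F ns col. \<bar>F\<bar> \<le> M \<and> (\<forall>i<r. 1 \<le> ns i \<and> ns i \<le> N) \<and>
        (\<forall>i<r. col i < r \<and> (\<forall>p\<in>P. c (F + pvev p (ns i)) = col i)) \<and> inj_on col {..<r})"
    unfolding pvfocus_def by blast
  then show "\<exists>a n. \<bar>a\<bar> \<le> max N M \<and> 1 \<le> n \<and> n \<le> max N M \<and> (\<forall>p\<in>P. c (a + pvev p n) = c a)"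
  proof (elim disjE exE conjE)
    fix a n assume "\<bar>a\<bar> \<le> M" "1 \<le> n" "n \<le> N" "\<forall>p\<in>P. c (a + pvev p n) = c a"
    then show ?thesis by (intro exI[of _ a] exI[of _ n]) auto
  next
    fix F ns col assume F: "\<bar>F\<bar> \<le> M" and ns: "\<forall>i<r. 1 \<le> ns i \<and> ns i \<le> N"
      and col: "\<forall>i<r. col i < r \<and> (\<forall>p\<in>P. c (F + pvev p (ns i)) = col i)" and inj: "inj_on col {..<r}"
    have pvsub: "col ` {..<r} \<subseteq> {..<r}" using col by auto
    have "card (col ` {..<r}) = card {..<r}" using card_image[OF inj] by simp
    then have "col ` {..<r} = {..<r}" using card_subset_eq[OF _ pvsub] by auto
    then obtain i where i: "i < r" "col i = c F" using cr by (metis imageE lessThan_iff)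
    show ?thesis using F ns col i by (intro exI[of _ F] exI[of _ "ns i"]) auto
  qed
qed

lemma PV_all: "\<forall>r. finite P \<longrightarrow> (0,0,0) \<notin> P \<longrightarrow> (\<exists>N. pvgood P r N)"
proof (induction P rule: wf_induct[OF wf_inv_image[OF wf_LR, where f=pvwt]])
  case (1 P)
  show ?case
  proof (intro allI impI)
    fix r assume fP: "finite P" and z: "(0,0,0) \<notin> P"
    show "\<exists>N. pvgood P r N"
    proof (cases "P = {}")
      case True
      then show ?thesis unfolding pvgood_def by (intro exI[of _ 1]) (auto intro: exI[of _ 0])
    next
      case False
      then obtain p0 where "p0 \<in> P" by blast
      then obtain p1 where p1: "p1 \<in> P" "\<forall>p\<in>P. pvdeg p1 \<le> pvdeg p"
        using ex_has_least_nat[of "\<lambda>p. p \<in> P" p0 pvdeg] by blast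
      have p10: "p1 \<noteq> (0,0,0)" using p1 z by auto
      have IH: "\<exists>N. pvgood Q R N" if "(pvwt Q, pvwt P) \<in> pvLR" "finite Q" "(0,0,0) \<notin> Q" for Q R
        using "1" that by auto
      obtain N M where "pvfocus P r r N M" using focus_all[OF fP p1(1) p10 p1(2) IH] by blast
      then show ?thesis using good_from_focus by blast
    qed
  qed
qed

lemma PV: "finite P \<Longrightarrow> (0,0,0) \<notin> P \<Longrightarrow> \<exists>N. pvgood P r N"
  using PV_all by blast

lemma cube_recurrence:
  assumes "\<forall>x. (c::int \<Rightarrow> nat) x < r"
  shows "\<exists>a n. 1 \<le> n \<and> c (a + n^3) = c a"
proof -
  obtain N where "pvgood {(0,0,1)} r N" using PV[of "{(0,0,1)}" r] by auto
  then show ?thesis using assms unfolding pvgood_def by (fastforce simp: pvev_def)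
qed



definition iscube :: "int \<Rightarrow> bool" where "iscube v \<longleftrightarrow> (\<exists>w. v = w^3)"

lemma iscube_neg: "iscube (- v) \<longleftrightarrow> iscube v"
proof -
  have "iscube v" if "iscube (- v)" for v
  proof -
    from that obtain w where "- v = w^3" unfolding iscube_def by blast
    then have "v = (-w)^3" by (simp add: power3_eq_cube)
    then show ?thesis unfolding iscube_def by blast
  qed
  from this[of v] this[of "-v"] show ?thesis by auto
qed

lemma iscube_pos: assumes "iscube v" "0 < v" shows "\<exists>w>0. v = w^3"
proof -
  obtain w where w: "v = w^3" using assms unfolding iscube_def by blast
  have "0 < w"
  proof (rule ccontr)
    assume "\<not> 0 < w"
    then have "w \<le> 0" by simp
    moreover have "0 \<le> w * w" by simp
    ultimately have "w * w * w \<le> 0" by (metis mult_nonneg_nonpos)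
    then have "w^3 \<le> 0" by (simp add: power3_eq_cube)
    then show False using assms w by simp
  qed
  then show ?thesis using w by blast
qed

lemma cube_bound:
  fixes x x1 y :: int
  assumes "0 < x1" "0 < y" "0 < x" "x^3 = x1^3 + y^3"
  shows "x \<le> x1^3"
proof -
  have "y^3 < x^3" using assms by (simp add: power3_eq_cube)
  then have "y < x" using assms(3) by (meson power_less_imp_less_base order_less_imp_le)
  then have "y \<le> x - 1" by simp
  then have "y^3 \<le> (x - 1)^3" using assms(2) by (intro power_mono) auto
  moreover have "(x - 1)^3 = x^3 - 3*x^2 + 3*x - 1" by (simp add: power3_eq_cube power2_eq_square algebra_simps)
  ultimately have h: "x1^3 \<ge> 3*x^2 - 3*x + 1" using assms(4) by linarith
  have "0 \<le> (3*x - 1) * (x - 1)" using assms(3) by (intro mult_nonneg_nonneg) auto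
  then have "x \<le> 3*x^2 - 3*x + 1" by (simp add: power2_eq_square algebra_simps)
  then show ?thesis using h by linarith
qed

lemma half_cube:
  assumes inf: "infinite D" and pos: "\<forall>d\<in>D. e < d \<and> iscube (d - e)"
    and pw: "\<forall>u\<in>D. \<forall>v\<in>D. u \<noteq> v \<longrightarrow> iscube (u - v)"
  shows False
proof -
  obtain d1 where d1: "d1 \<in> D" using infinite_imp_nonempty[OF inf] by blast
  obtain x1 where x1: "0 < x1" "d1 - e = x1^3" using iscube_pos pos d1 by force
  have bnd: "d - e \<le> (d1 - e)^3" if d: "d \<in> D" for d
  proof -
    have v1: "d1 - e \<le> (d1 - e)^3"
    proof -
      have "1 \<le> d1 - e" using pos d1 by force
      then have "1 \<le> (d1 - e)^2" by (simp add: one_le_power)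
      then have "(d1 - e) * 1 \<le> (d1 - e) * (d1 - e)^2" using \<open>1 \<le> d1 - e\<close> by (intro mult_left_mono) auto
      then show ?thesis by (simp add: power3_eq_cube power2_eq_square)
    qed
    show ?thesis
    proof (cases "d \<le> d1")
      case True then show ?thesis using v1 by linarith
    next
      case False
      obtain x where x: "0 < x" "d - e = x^3" using iscube_pos pos d by force
      have "iscube (d - d1)" using pw d d1 False by auto
      then obtain y where y: "0 < y" "d - d1 = y^3" using iscube_pos False by force
      have "x^3 = x1^3 + y^3" using x y x1 by linarith
      then have "x \<le> x1^3" using cube_bound x1 y x by blast
      then have "x^3 \<le> (x1^3)^3" using x by (intro power_mono) auto
      then show ?thesis using x x1 by simp
    qed
  qed
  have "D \<subseteq> {e <.. e + (d1 - e)^3}" using bnd pos by force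
  then show False using inf finite_subset by (metis finite_greaterThanAtMost_int)
qed

lemma no_cube_set:
  assumes inf: "infinite (D::int set)" and pw: "\<forall>u\<in>D. \<forall>v\<in>D. u \<noteq> v \<longrightarrow> iscube (u - v)"
  shows False
proof -
  obtain e where e: "e \<in> D" using infinite_imp_nonempty[OF inf] by blast
  have "D \<subseteq> {d\<in>D. e < d} \<union> {d\<in>D. d < e} \<union> {e}" by auto
  then have "infinite {d\<in>D. e < d} \<or> infinite {d\<in>D. d < e}"
    using inf by (meson finite.emptyI finite.insertI finite_UnI finite_subset)
  then show False
  proof
    assume "infinite {d\<in>D. e < d}"
    then show False
      by (rule half_cube[where e=e]) (use pw e in auto)
  next
    assume i: "infinite {d\<in>D. d < e}"
    have "infinite (uminus ` {d\<in>D. d < e})"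
    proof
      assume "finite (uminus ` {d\<in>D. d < e})"
      moreover have "inj_on uminus {d\<in>D. d < (e::int)}" by (rule inj_onI) simp
      ultimately show False using i finite_imageD by blast
    qed
    then show False
    proof (rule half_cube[where e="-e"])
      show "\<forall>d\<in>uminus ` {d \<in> D. d < e}. - e < d \<and> iscube (d - - e)"
      proof
        fix d assume "d \<in> uminus ` {d \<in> D. d < e}"
        then obtain d' where d': "d' \<in> D" "d' < e" "d = - d'" by blast
        have "iscube (e - d')" using pw e d' by auto
        moreover have "d - - e = e - d'" using d' by simp
        ultimately show "- e < d \<and> iscube (d - - e)" using d' by simp
      qed
      show "\<forall>u\<in>uminus ` {d \<in> D. d < e}. \<forall>v\<in>uminus ` {d \<in> D. d < e}. u \<noteq> v \<longrightarrow> iscube (u - v)"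
      proof (intro ballI impI)
        fix u v assume "u \<in> uminus ` {d \<in> D. d < e}" "v \<in> uminus ` {d \<in> D. d < e}" "u \<noteq> v"
        then obtain a b where ab: "a \<in> D" "b \<in> D" "u = - a" "v = - b" "a \<noteq> b" by blast
        have "iscube (b - a)" using pw ab by auto
        moreover have "u - v = b - a" using ab by simp
        ultimately show "iscube (u - v)" by simp
      qed
    qed
  qed
qed



definition symd :: "'a set \<Rightarrow> 'a set \<Rightarrow> 'a set" where "symd A B = (A - B) \<union> (B - A)"
definition Bad :: "int set set" where "Bad = {{x, y} | x y. x - y \<noteq> 0 \<and> (\<exists>z::int. x - y = z ^ 3)}"

lemma symd_inv[simp]: "symd y (symd y z) = z" unfolding symd_def by auto
lemma symd_cancel: "symd (symd y a) (symd y b) = symd a b" unfolding symd_def by auto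
lemma symd_empty[simp]: "symd {} X = X" unfolding symd_def by auto

lemma Bad_iff: "s \<in> Bad \<longleftrightarrow> (\<exists>x y. s = {x,y} \<and> x \<noteq> y \<and> iscube (x - y))"
  unfolding Bad_def iscube_def by auto

lemma Bad_card: "s \<in> Bad \<Longrightarrow> finite s \<and> card s = 2"
  unfolding Bad_iff by auto

lemma Bad_pair: assumes "{u,v} \<in> Bad" "u \<noteq> v" shows "iscube (u - v)"
proof -
  obtain x y where xy: "{u,v} = {x,y}" "x \<noteq> y" "iscube (x - y)" using assms(1) unfolding Bad_iff by blast
  then have "(u = x \<and> v = y) \<or> (u = y \<and> v = x)" by (metis doubleton_eq_iff)
  then show ?thesis
  proof
    assume "u = y \<and> v = x"
    then have "u - v = - (x - y)" by simp
    then show ?thesis using xy(3) iscube_neg by metis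
  qed (use xy in auto)
qed

lemma Bad_mem: assumes "s \<in> Bad" "e \<in> s" shows "\<exists>c. c \<noteq> e \<and> s = {e, c} \<and> iscube (e - c)"
proof -
  obtain x y where xy: "s = {x,y}" "x \<noteq> y" "iscube (x - y)" using assms(1) unfolding Bad_iff by blast
  show ?thesis
  proof (cases "e = x")
    case True then show ?thesis using xy by (intro exI[of _ y]) auto
  next
    case False
    then have "e = y" using xy assms(2) by blast
    moreover have "iscube (y - x)" using xy(3) iscube_neg[of "x - y"] by simp
    ultimately show ?thesis using xy by (intro exI[of _ x]) auto
  qed
qed

lemma core0:
  assumes inf: "infinite Z"
  shows "\<exists>y\<in>Z. \<exists>z\<in>Z. y \<noteq> z \<and> symd y z \<notin> Bad"
proof (rule ccontr)
  assume "\<not> ?thesis"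
  then have H: "\<And>y z. y \<in> Z \<Longrightarrow> z \<in> Z \<Longrightarrow> y \<noteq> z \<Longrightarrow> symd y z \<in> Bad" by blast
  obtain y0 where y0: "y0 \<in> Z" using infinite_imp_nonempty[OF inf] by blast
  define P where "P z = symd y0 z" for z
  have PZ: "P z \<in> Bad" if "z \<in> Z" "z \<noteq> y0" for z using H y0 that unfolding P_def by auto
  have Pzw: "symd (P z) (P w) = symd z w" for z w unfolding P_def by (rule symd_cancel)
  have Pinj: "P z = P w \<Longrightarrow> z = w" for z w unfolding P_def by (metis symd_inv)
  define Z' where "Z' = Z - {y0}"
  have inf': "infinite Z'" using inf unfolding Z'_def by (rule infinite_remove)
  obtain z1 where z1: "z1 \<in> Z'" using infinite_imp_nonempty[OF inf'] by blast
  have "z1 \<in> Z" "z1 \<noteq> y0" using z1 unfolding Z'_def by simp_all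
  then have "P z1 \<in> Bad" by (rule PZ)
  then obtain a b where ab: "P z1 = {a,b}" "a \<noteq> b" unfolding Bad_iff by blast
  define Z'' where "Z'' = Z' - {z1}"
  have inf'': "infinite Z''" using inf' unfolding Z''_def by (rule infinite_remove)
  have ab_in: "a \<in> P z \<or> b \<in> P z" if z: "z \<in> Z''" for z
  proof (rule ccontr)
    assume nab: "\<not> (a \<in> P z \<or> b \<in> P z)"
    have "P z \<in> Bad" using z PZ unfolding Z''_def Z'_def by auto
    then obtain c e where ce: "P z = {c,e}" "c \<noteq> e" unfolding Bad_iff by blast
    have "symd z1 z \<in> Bad" using H z z1 unfolding Z''_def Z'_def by auto
    then have "symd (P z1) (P z) \<in> Bad" using Pzw by simp
    then have c2: "card (symd {a,b} {c,e}) = 2" using ab ce Bad_card by metis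
    have "symd {a,b} {c,e} = {a,b,c,e}" using nab ce unfolding symd_def by auto
    moreover have "card {a,b,c,e} = 4" using nab ce ab by auto
    ultimately show False using c2 by simp
  qed
  have "Z'' \<subseteq> {z\<in>Z''. a \<in> P z} \<union> {z\<in>Z''. b \<in> P z}" using ab_in by blast
  then have "infinite {z\<in>Z''. a \<in> P z} \<or> infinite {z\<in>Z''. b \<in> P z}"
    using inf'' by (meson finite_UnI finite_subset)
  then obtain e where infe: "infinite {z\<in>Z''. e \<in> P z}" by blast
  define Ze where "Ze = {z\<in>Z''. e \<in> P z}"
  have Ze: "z \<in> Z" "z \<noteq> y0" "e \<in> P z" if "z \<in> Ze" for z
    using that unfolding Ze_def Z''_def Z'_def by auto
  have oth: "\<exists>c. c \<noteq> e \<and> P z = {e, c} \<and> iscube (e - c)" if "z \<in> Ze" for z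
    using Bad_mem PZ Ze that by blast
  define D where "D = \<Union> (P ` Ze)"
  have infD: "infinite D"
  proof
    assume "finite D"
    then have "finite (Pow D)" by simp
    moreover have "P ` Ze \<subseteq> Pow D" unfolding D_def by blast
    ultimately have "finite (P ` Ze)" using finite_subset by blast
    moreover have "inj_on P Ze" by (rule inj_onI) (rule Pinj)
    ultimately have "finite Ze" using finite_image_iff by blast
    then show False using infe unfolding Ze_def by simp
  qed
  have pw: "\<forall>u\<in>D. \<forall>v\<in>D. u \<noteq> v \<longrightarrow> iscube (u - v)"
  proof (intro ballI impI)
    fix u v assume u: "u \<in> D" and v: "v \<in> D" and uv: "u \<noteq> v"
    obtain z where z: "z \<in> Ze" "u \<in> P z" using u unfolding D_def by blast
    obtain w where w: "w \<in> Ze" "v \<in> P w" using v unfolding D_def by blast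
    obtain cz where cz: "cz \<noteq> e" "P z = {e, cz}" "iscube (e - cz)" using oth z by blast
    obtain cw where cw: "cw \<noteq> e" "P w = {e, cw}" "iscube (e - cw)" using oth w by blast
    show "iscube (u - v)"
    proof (cases "u = e")
      case True
      then have "v = cw" using uv w cw by auto
      then show ?thesis using True cw by simp
    next
      case ue: False
      then have ucz: "u = cz" using z cz by auto
      show ?thesis
      proof (cases "v = e")
        case True
        have "u - v = - (e - cz)" using True ucz by simp
        then show ?thesis using cz iscube_neg by metis
      next
        case False
        then have vcw: "v = cw" using w cw by auto
        have "z \<noteq> w"
        proof
          assume "z = w"
          then have "{e, cz} = {e, cw}" using cz cw by simp
          then have "cz = cw" using cz(1) cw(1) by (metis doubleton_eq_iff)
          then show False using ucz vcw uv by simp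
        qed
        then have "symd z w \<in> Bad" using H Ze z w by blast
        then have "symd (P z) (P w) \<in> Bad" using Pzw by simp
        moreover have "symd (P z) (P w) = {u, v}"
          using cz(1,2) cw(1,2) ucz vcw uv unfolding symd_def by auto
        ultimately show ?thesis using Bad_pair uv by simp
      qed
    qed
  qed
  show False using no_cube_set[OF infD pw] .
qed

lemma two_of_three:
  assumes "y \<noteq> z" "y \<noteq> w" "z \<noteq> w" "finite y" "finite z" "finite w"
  shows "\<exists>u\<in>{y,z,w}. \<exists>v\<in>{y,z,w}. u \<noteq> v \<and> 2 \<le> card (symd u v)"
proof (rule ccontr)
  assume neg: "\<not> ?thesis"
  then have c1: "card (symd y z) \<le> 1" "card (symd y w) \<le> 1" using assms by auto
  have fin: "finite (symd y z)" "finite (symd y w)" using assms unfolding symd_def by auto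
  have ne: "symd y z \<noteq> {}" "symd y w \<noteq> {}" using assms unfolding symd_def by auto
  have "card (symd y z) = 1" using c1 fin ne by (simp add: le_Suc_eq card_0_eq)
  then obtain \<alpha> where a: "symd y z = {\<alpha>}" by (auto simp: card_Suc_eq)
  have "card (symd y w) = 1" using c1 fin ne by (simp add: le_Suc_eq card_0_eq)
  then obtain \<beta> where b: "symd y w = {\<beta>}" by (auto simp: card_Suc_eq)
  have z: "z = symd y {\<alpha>}" using a by (metis symd_inv)
  have w: "w = symd y {\<beta>}" using b by (metis symd_inv)
  have "\<alpha> \<noteq> \<beta>"
  proof
    assume "\<alpha> = \<beta>"
    then have "z = w" using z w by simp
    then show False using assms(3) by simp
  qed
  have "symd z w = symd {\<alpha>} {\<beta>}" unfolding z w by (rule symd_cancel)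
  also have "\<dots> = {\<alpha>, \<beta>}" using \<open>\<alpha> \<noteq> \<beta>\<close> unfolding symd_def by auto
  finally have "card (symd z w) = 2" using \<open>\<alpha> \<noteq> \<beta>\<close> by simp
  then show False using neg assms by auto
qed

lemma coreT:
  assumes fT: "finite T" and inf: "infinite Z" and fZ: "\<forall>s\<in>Z. finite s"
  shows "\<exists>y\<in>Z. \<exists>z\<in>Z. y \<noteq> z \<and> symd T (symd y z) \<notin> Bad"
proof (cases "T = {}")
  case True
  show ?thesis unfolding True symd_empty by (rule core0[OF inf])
next
  case Tne: False
  have cov: "Z \<subseteq> (\<Union>C\<in>Pow T. {s\<in>Z. s \<inter> T = C})"
  proof
    fix s assume "s \<in> Z"
    then show "s \<in> (\<Union>C\<in>Pow T. {s\<in>Z. s \<inter> T = C})" by (intro UN_I[of "s \<inter> T"]) auto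
  qed
  have "\<exists>C\<in>Pow T. infinite {s\<in>Z. s \<inter> T = C}"
  proof (rule ccontr)
    assume "\<not> ?thesis"
    then have "finite (\<Union>C\<in>Pow T. {s\<in>Z. s \<inter> T = C})" using fT by (intro finite_UN_I) auto
    then show False using inf cov finite_subset by blast
  qed
  then obtain C where infC: "infinite {s\<in>Z. s \<inter> T = C}" by blast
  define Z1 where "Z1 = {s\<in>Z. s \<inter> T = C}"
  have inf1: "infinite Z1" using infC unfolding Z1_def .
  obtain y where y: "y \<in> Z1" using infinite_imp_nonempty[OF inf1] by blast
  have i1: "infinite (Z1 - {y})" using inf1 by (rule infinite_remove)
  then obtain z where z: "z \<in> Z1 - {y}" using infinite_imp_nonempty by blast
  have "infinite (Z1 - {y} - {z})" using i1 by (rule infinite_remove)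
  then obtain w where w: "w \<in> Z1 - {y} - {z}" using infinite_imp_nonempty by blast
  have yzw: "y \<in> Z" "z \<in> Z" "w \<in> Z" using y z w unfolding Z1_def by simp_all
  have fyzw: "finite y" "finite z" "finite w" using yzw fZ by simp_all
  have dd: "y \<noteq> z" "y \<noteq> w" "z \<noteq> w" using z w by auto
  obtain u v where uv: "u \<in> {y,z,w}" "v \<in> {y,z,w}" "u \<noteq> v" "2 \<le> card (symd u v)"
    using two_of_three[OF dd fyzw] by blast
  have uv1: "u \<in> Z1" "v \<in> Z1" using uv(1,2) y z w by blast+
  have uT: "u \<inter> T = v \<inter> T" using uv1 unfolding Z1_def by simp
  have uZ: "u \<in> Z" "v \<in> Z" using uv1 unfolding Z1_def by simp_all
  have disj: "T \<inter> symd u v = {}"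
  proof (rule equals0I)
    fix x assume "x \<in> T \<inter> symd u v"
    then have xT: "x \<in> T" and xu: "x \<in> u \<longleftrightarrow> x \<notin> v" unfolding symd_def by auto
    have "x \<in> u \<inter> T \<longleftrightarrow> x \<in> v \<inter> T" using uT by simp
    then show False using xT xu by simp
  qed
  have eq: "symd T (symd u v) = T \<union> symd u v" using disj unfolding symd_def by blast
  have fuv: "finite (symd u v)" using uZ fZ unfolding symd_def by simp
  have "card (symd T (symd u v)) = card T + card (symd u v)"
    unfolding eq using card_Un_disjoint[OF fT fuv disj] .
  moreover have "1 \<le> card T" using Tne fT by (simp add: Suc_le_eq card_gt_0_iff)
  ultimately have "card (symd T (symd u v)) \<ge> 3" using uv(4) by linarith
  then have "symd T (symd u v) \<notin> Bad"
  proof (intro notI)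
    assume "symd T (symd u v) \<in> Bad"
    then have "card (symd T (symd u v)) = 2" using Bad_card by blast
    then show False using \<open>card (symd T (symd u v)) \<ge> 3\<close> by simp
  qed
  then show ?thesis using uZ uv(3) by blast
qed



lemma BoolZ_carrier: "carrier BoolZ = {S. finite S}" by (simp add: BoolZ_def)
lemma BoolZ_mult: "x \<otimes>\<^bsub>BoolZ\<^esub> y = symd x y" by (simp add: BoolZ_def symd_def)
lemma BoolZ_one: "\<one>\<^bsub>BoolZ\<^esub> = {}" by (simp add: BoolZ_def)

lemma group_BoolZ: "group BoolZ"
  by (rule groupI) (auto simp: BoolZ_def)

lemma inv_BoolZ: "finite x \<Longrightarrow> inv\<^bsub>BoolZ\<^esub> x = x"
  by (rule group.inv_equality[OF group_BoolZ]) (auto simp: BoolZ_def)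

lemma pow_nat_BoolZ: "x [^]\<^bsub>BoolZ\<^esub> (n::nat) = (if even n then {} else x)"
proof (induction n)
  case 0 then show ?case by (simp add: BoolZ_one)
next
  case (Suc n) then show ?case by (simp add: BoolZ_mult symd_def)
qed

lemma pow_int_BoolZ: assumes "finite x" "odd (m::int)" shows "x [^]\<^bsub>BoolZ\<^esub> m = x"
proof (cases "m < 0")
  case True
  then have "odd (nat (-m))" using assms(2) by (simp add: even_nat_iff)
  then show ?thesis using True assms by (simp add: int_pow_def2 pow_nat_BoolZ inv_BoolZ)
next
  case False
  then have "odd (nat m)" using assms(2) by (simp add: even_nat_iff)
  then show ?thesis using False by (simp add: int_pow_def2 pow_nat_BoolZ)
qed

definition symset :: "int set set \<Rightarrow> int set" where
  "symset S = {w. odd (card {s\<in>S. w \<in> s})}"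

lemma foldr_symd: "foldr (\<lambda>i acc. symd (g i) acc) xs {} = {w. odd (length (filter (\<lambda>i. w \<in> g i) xs))}"
  by (induction xs) (auto simp: symd_def)

lemma upt_set_eq: "{i. i < n \<and> P ([0..<n] ! i)} = {i. i < n \<and> P i}"
  by auto

lemma ppp_eq:
  assumes "\<forall>i<length ms. finite (x (\<sigma> i)) \<and> odd (ms ! i)"
  shows "perm_power_prod BoolZ ms x \<sigma> = {w. odd (card {i. i < length ms \<and> w \<in> x (\<sigma> i)})}"
proof -
  have "perm_power_prod BoolZ ms x \<sigma> = foldr (\<lambda>i acc. symd (x (\<sigma> i)) acc) [0..<length ms] {}"
    unfolding perm_power_prod_def BoolZ_one
    by (rule foldr_cong) (use assms in \<open>auto simp: pow_int_BoolZ BoolZ_mult\<close>)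
  also have "\<dots> = {w. odd (card {i. i < length ms \<and> w \<in> x (\<sigma> i)})}"
    unfolding foldr_symd length_filter_conv_card length_upt diff_zero upt_set_eq[of "length ms" "\<lambda>i. _ \<in> x (\<sigma> i)"] ..
  finally show ?thesis .
qed

lemma card_perm:
  assumes bx: "bij_betw x {..<k} S" and p: "\<sigma> permutes {..<k}"
  shows "card {i. i < k \<and> w \<in> x (\<sigma> i)} = card {s\<in>S. w \<in> s}"
proof -
  have b: "bij_betw (x \<circ> \<sigma>) {..<k} S" using bij_betw_trans[OF permutes_imp_bij[OF p] bx] .
  have sub: "{i. i < k \<and> w \<in> x (\<sigma> i)} \<subseteq> {..<k}" by auto
  have inj: "inj_on (x \<circ> \<sigma>) {i. i < k \<and> w \<in> x (\<sigma> i)}"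
    using b sub unfolding bij_betw_def by (metis inj_on_subset)
  have "(x \<circ> \<sigma>) ` {i. i < k \<and> w \<in> x (\<sigma> i)} = {s\<in>S. w \<in> s}"
  proof
    show "(x \<circ> \<sigma>) ` {i. i < k \<and> w \<in> x (\<sigma> i)} \<subseteq> {s\<in>S. w \<in> s}"
      using b unfolding bij_betw_def by auto
    show "{s\<in>S. w \<in> s} \<subseteq> (x \<circ> \<sigma>) ` {i. i < k \<and> w \<in> x (\<sigma> i)}"
    proof
      fix s assume s: "s \<in> {s\<in>S. w \<in> s}"
      then obtain i where "i < k" "s = (x \<circ> \<sigma>) i" using b unfolding bij_betw_def
        by (metis (no_types, lifting) imageE lessThan_iff mem_Collect_eq)
      then show "s \<in> (x \<circ> \<sigma>) ` {i. i < k \<and> w \<in> x (\<sigma> i)}" using s by auto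
    qed
  qed
  then show ?thesis using card_image[OF inj] by simp
qed

lemma symset_insert:
  assumes "y \<notin> A" "finite A"
  shows "symset (insert y A) = symd y (symset A)"
proof -
  have "card {s\<in>insert y A. w \<in> s} = (if w \<in> y then Suc (card {s\<in>A. w \<in> s}) else card {s\<in>A. w \<in> s})" for w
  proof (cases "w \<in> y")
    case True
    then have "{s\<in>insert y A. w \<in> s} = insert y {s\<in>A. w \<in> s}" by auto
    then show ?thesis using True assms by simp
  next
    case False
    then have "{s\<in>insert y A. w \<in> s} = {s\<in>A. w \<in> s}" by auto
    then show ?thesis using False by simp
  qed
  then show ?thesis unfolding symset_def symd_def by auto
qed

lemma symset_finite: assumes "finite S" "\<forall>s\<in>S. finite s" shows "finite (symset S)"
proof -
  have "symset S \<subseteq> \<Union>S"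
  proof
    fix w assume "w \<in> symset S"
    then have "{s\<in>S. w \<in> s} \<noteq> {}" unfolding symset_def by (metis (no_types) card.empty even_zero mem_Collect_eq)
    then show "w \<in> \<Union>S" by auto
  qed
  then show ?thesis using assms by (meson finite_Union finite_subset)
qed

lemma cubeA_eq: "cubeA = {S. finite S} - Bad"
  unfolding cubeA_def Bad_def BoolZ_carrier ..

lemma part1:
  assumes len: "length ms \<ge> 2" and odd: "\<forall>m\<in>set ms. odd m"
  shows "ramsey_product_subset BoolZ ms cubeA"
  unfolding ramsey_product_subset_def
proof (intro conjI allI impI)
  show "cubeA \<subseteq> carrier BoolZ" unfolding cubeA_def by blast
next
  fix X assume X: "X \<subseteq> carrier BoolZ \<and> infinite X"
  define k where "k = length ms"
  have fX: "\<forall>s\<in>X. finite s" using X unfolding BoolZ_carrier by auto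
  obtain S0 where S0: "finite S0" "card S0 = k - 2" "S0 \<subseteq> X"
    using infinite_arbitrarily_large X by blast
  define T where "T = symset S0"
  have fT: "finite T" unfolding T_def using S0 fX by (intro symset_finite) auto
  have infZ: "infinite (X - S0)" using X S0 by (intro Diff_infinite_finite) auto
  obtain y z where yz: "y \<in> X - S0" "z \<in> X - S0" "y \<noteq> z" "symd T (symd y z) \<notin> Bad"
    using coreT[OF fT infZ] fX by blast
  define Sf where "Sf = insert y (insert z S0)"
  have cSf: "card Sf = k" unfolding Sf_def using S0 yz len unfolding k_def by auto
  have fSf: "finite Sf" unfolding Sf_def using S0 by simp
  have SfX: "Sf \<subseteq> X" unfolding Sf_def using S0 yz by auto
  have "symset Sf = symd y (symd z T)" unfolding Sf_def T_def
    using yz S0 by (simp add: symset_insert)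
  also have "\<dots> = symd T (symd y z)" unfolding symd_def by auto
  finally have sSf: "symset Sf = symd T (symd y z)" .
  have "finite (symset Sf)" using fSf SfX fX by (intro symset_finite) auto
  then have inA: "symset Sf \<in> cubeA" unfolding cubeA_eq using sSf yz by simp
  obtain x where bx0: "bij_betw x {0..<card Sf} Sf" using ex_bij_betw_nat_finite[OF fSf] by blast
  have bx: "bij_betw x {..<k} Sf" using bx0 cSf by (simp add: atLeast0LessThan)
  show "\<exists>x. x ` {..<length ms} \<subseteq> X \<and> inj_on x {..<length ms} \<and>
             (\<forall>\<sigma>. \<sigma> permutes {..<length ms} \<longrightarrow> perm_power_prod BoolZ ms x \<sigma> \<in> cubeA)"
  proof (intro exI[of _ x] conjI allI impI)
    show "x ` {..<length ms} \<subseteq> X" using bx SfX unfolding k_def bij_betw_def by simp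
    show "inj_on x {..<length ms}" using bx unfolding k_def bij_betw_def by simp
    fix \<sigma> assume p: "\<sigma> permutes {..<length ms}"
    have fin: "\<forall>i<length ms. finite (x (\<sigma> i)) \<and> odd (ms ! i)"
    proof (intro allI impI conjI)
      fix i assume i: "i < length ms"
      then have "\<sigma> i < k" using p unfolding k_def by (meson lessThan_iff permutes_in_image)
      then have "x (\<sigma> i) \<in> Sf" using bx unfolding bij_betw_def by auto
      then show "finite (x (\<sigma> i))" using SfX fX by auto
      show "odd (ms ! i)" using odd i by simp
    qed
    have "perm_power_prod BoolZ ms x \<sigma> = symset Sf"
      unfolding ppp_eq[of ms x \<sigma>, OF fin] symset_def
      using card_perm[OF bx p[folded k_def]] unfolding k_def by simp
    then show "perm_power_prod BoolZ ms x \<sigma> \<in> cubeA" using inA by simp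
  qed
qed


lemma BoolZ_simps: "carrier BoolZ = {S. finite S}" "x \<otimes>\<^bsub>BoolZ\<^esub> y = (x - y) \<union> (y - x)" "\<one>\<^bsub>BoolZ\<^esub> = {}"
  by (simp_all add: BoolZ_def)

context
begin
declare BoolZ_simps[simp] inv_BoolZ[simp]
lemma pair_notin_cubeA: "n \<noteq> 0 \<Longrightarrow> {a, a + n^3} \<notin> cubeA"
proof -
  assume nz: "n \<noteq> 0"
  have e: "a - (a + n^3) = (-n)^3" by (simp add: power3_eq_cube)
  have "a - (a + n^3) \<noteq> 0" using nz by simp
  then have "{a, a + n^3} \<in> {{x, y} | x y. x - y \<noteq> 0 \<and> (\<exists>z::int. x - y = z ^ 3)}"
    using e by blast
  then show ?thesis unfolding cubeA_def by blast
qed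

lemma part2: "\<not> (\<exists>B. large_subset BoolZ B \<and>
              {b \<otimes>\<^bsub>BoolZ\<^esub> inv\<^bsub>BoolZ\<^esub> b' | b b'. b \<in> B \<and> b' \<in> B} \<subseteq> cubeA)"
proof
  assume "\<exists>B. large_subset BoolZ B \<and> {b \<otimes>\<^bsub>BoolZ\<^esub> inv\<^bsub>BoolZ\<^esub> b' | b b'. b \<in> B \<and> b' \<in> B} \<subseteq> cubeA"
  then obtain B F where BC: "B \<subseteq> {S. finite S}" and fF: "finite F"
    and cov: "{S. finite S} = (\<Union>f\<in>F. (\<lambda>b. (f - b) \<union> (b - f)) ` B)"
    and sub: "{b \<otimes>\<^bsub>BoolZ\<^esub> inv\<^bsub>BoolZ\<^esub> b' | b b'. b \<in> B \<and> b' \<in> B} \<subseteq> cubeA"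
    unfolding large_subset_def by auto
  obtain g where g: "bij_betw g F {0..<card F}" using ex_bij_betw_finite_nat[OF fF] by blast
  have ex: "\<exists>f. f \<in> F \<and> (\<exists>b\<in>B. {x} = (f - b) \<union> (b - f))" for x :: int
  proof -
    have "{x} \<in> (\<Union>f\<in>F. (\<lambda>b. (f - b) \<union> (b - f)) ` B)" by (subst cov[symmetric]) simp
    then show ?thesis by blast
  qed
  define sel where "sel x = (SOME f. f \<in> F \<and> (\<exists>b\<in>B. {x} = (f - b) \<union> (b - f)))" for x :: int
  have sel: "sel x \<in> F \<and> (\<exists>b\<in>B. {x} = (sel x - b) \<union> (b - sel x))" for x
    unfolding sel_def using someI_ex[OF ex[of x]] .
  define c where "c x = g (sel x)" for x
  have "\<forall>x. c x < card F" using g sel unfolding c_def bij_betw_def by auto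
  then obtain a n where n: "1 \<le> n" and ca: "c (a + n^3) = c a" using cube_recurrence by blast
  have "sel (a + n^3) = sel a" using ca g sel unfolding c_def bij_betw_def inj_on_def by blast
  then obtain f b b' where "b \<in> B" "b' \<in> B" and e1: "{a} = (f - b) \<union> (b - f)"
    and e2: "{a + n^3} = (f - b') \<union> (b' - f)" using sel[of a] sel[of "a + n^3"] by metis
  have fb': "finite b'" using BC \<open>b' \<in> B\<close> by auto
  have mem: "b \<otimes>\<^bsub>BoolZ\<^esub> inv\<^bsub>BoolZ\<^esub> b' \<in> cubeA" using sub \<open>b \<in> B\<close> \<open>b' \<in> B\<close> by blast
  have eq: "b \<otimes>\<^bsub>BoolZ\<^esub> inv\<^bsub>BoolZ\<^esub> b' = {a, a + n^3}"
  proof -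
    have hb: "b = (f - {a}) \<union> ({a} - f)" using e1 by blast
    have hb': "b' = (f - {a + n^3}) \<union> ({a + n^3} - f)" using e2 by blast
    have ne: "a \<noteq> a + n^3" using n by simp
    have "b \<otimes>\<^bsub>BoolZ\<^esub> inv\<^bsub>BoolZ\<^esub> b' = (b - b') \<union> (b' - b)" using fb' by simp
    also have "\<dots> = {a, a + n^3}" unfolding hb hb' using ne by (auto simp del: BoolZ_simps)
    finally show ?thesis .
  qed
  have nz: "n \<noteq> 0" using n by simp
  have "{a, a + n^3} \<in> cubeA" using mem unfolding eq .
  with pair_notin_cubeA[OF nz] show False by contradiction
qed

lemma part3: "\<not> (\<exists>T. totally_bounded_group_topology BoolZ T \<and> nhd_of_identity BoolZ T cubeA)"
proof
  assume "\<exists>T. totally_bounded_group_topology BoolZ T \<and> nhd_of_identity BoolZ T cubeA"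
  then obtain T where tbg: "totally_bounded_group_topology BoolZ T"
    and nh: "nhd_of_identity BoolZ T cubeA" by blast
  have gt: "group_topology BoolZ T" using tbg unfolding totally_bounded_group_topology_def by blast
  have top: "topspace T = carrier BoolZ" using gt unfolding group_topology_def by blast
  have cm: "continuous_map (prod_topology T T) T (\<lambda>(x, y). x \<otimes>\<^bsub>BoolZ\<^esub> y)"
    using gt unfolding group_topology_def by blast
  have tb: "\<forall>U. openin T U \<and> \<one>\<^bsub>BoolZ\<^esub> \<in> U \<longrightarrow>
        (\<exists>F. finite F \<and> F \<subseteq> carrier BoolZ \<and> carrier BoolZ = (\<Union>f\<in>F. (\<lambda>u. f \<otimes>\<^bsub>BoolZ\<^esub> u) ` U))"
    using tbg unfolding totally_bounded_group_topology_def by blast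
  obtain U where U: "openin T U" "\<one>\<^bsub>BoolZ\<^esub> \<in> U" "U \<subseteq> cubeA"
    using nh unfolding nhd_of_identity_def by blast
  define W where "W = {z \<in> topspace (prod_topology T T). (\<lambda>(x, y). x \<otimes>\<^bsub>BoolZ\<^esub> y) z \<in> U}"
  have oW: "openin (prod_topology T T) W" unfolding W_def
    by (rule openin_continuous_map_preimage[OF cm U(1)])
  have o1: "\<one>\<^bsub>BoolZ\<^esub> \<in> topspace T" unfolding top by (simp del: BoolZ_simps add: BoolZ_def)
  have o2: "\<one>\<^bsub>BoolZ\<^esub> \<otimes>\<^bsub>BoolZ\<^esub> \<one>\<^bsub>BoolZ\<^esub> = \<one>\<^bsub>BoolZ\<^esub>" by (simp del: BoolZ_simps add: BoolZ_def)
  have W1: "(\<one>\<^bsub>BoolZ\<^esub>, \<one>\<^bsub>BoolZ\<^esub>) \<in> W" unfolding W_def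
  proof (rule CollectI, rule conjI)
    show "(\<one>\<^bsub>BoolZ\<^esub>, \<one>\<^bsub>BoolZ\<^esub>) \<in> topspace (prod_topology T T)"
      unfolding topspace_prod_topology using o1 by blast
    show "(\<lambda>(x, y). x \<otimes>\<^bsub>BoolZ\<^esub> y) (\<one>\<^bsub>BoolZ\<^esub>, \<one>\<^bsub>BoolZ\<^esub>) \<in> U"
      unfolding case_prod_conv o2 by (rule U(2))
  qed
  obtain V1 V2 where V: "openin T V1" "openin T V2" "\<one>\<^bsub>BoolZ\<^esub> \<in> V1" "\<one>\<^bsub>BoolZ\<^esub> \<in> V2" "V1 \<times> V2 \<subseteq> W"
    using openin_prod_topology_alt[THEN iffD1, OF oW, rule_format, OF W1] by (elim exE conjE) auto
  define V where "V = V1 \<inter> V2"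
  have oV: "openin T V" "\<one>\<^bsub>BoolZ\<^esub> \<in> V" using V openin_Int[OF V(1,2)] unfolding V_def by blast+
  have VC: "V \<subseteq> carrier BoolZ" using openin_subset[OF oV(1)] top by simp
  have exF: "\<exists>F. finite F \<and> F \<subseteq> carrier BoolZ \<and> carrier BoolZ = (\<Union>f\<in>F. (\<lambda>u. f \<otimes>\<^bsub>BoolZ\<^esub> u) ` V)"
    by (rule tb[rule_format]) (intro conjI oV)
  then obtain F where F0: "finite F \<and> F \<subseteq> carrier BoolZ \<and> carrier BoolZ = (\<Union>f\<in>F. (\<lambda>u. f \<otimes>\<^bsub>BoolZ\<^esub> u) ` V)"
    by (rule exE)
  note F = conjunct1[OF F0] conjunct1[OF conjunct2[OF F0]] conjunct2[OF conjunct2[OF F0]]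
  have "large_subset BoolZ V" unfolding large_subset_def
    by (intro conjI exI[of _ F]) (rule VC, rule F(1), rule F(2), rule F(3))
  moreover have "{b \<otimes>\<^bsub>BoolZ\<^esub> inv\<^bsub>BoolZ\<^esub> b' | b b'. b \<in> V \<and> b' \<in> V} \<subseteq> cubeA"
  proof
    fix z assume "z \<in> {b \<otimes>\<^bsub>BoolZ\<^esub> inv\<^bsub>BoolZ\<^esub> b' | b b'. b \<in> V \<and> b' \<in> V}"
    then obtain b b' where z: "z = b \<otimes>\<^bsub>BoolZ\<^esub> inv\<^bsub>BoolZ\<^esub> b'" and bb: "b \<in> V" "b' \<in> V" by blast
    have "(b, b') \<in> W" using V(5) bb unfolding V_def by blast
    then have "(\<lambda>(x, y). x \<otimes>\<^bsub>BoolZ\<^esub> y) (b, b') \<in> U" unfolding W_def by blast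
    then have bu: "b \<otimes>\<^bsub>BoolZ\<^esub> b' \<in> U" unfolding case_prod_conv .
    have "b' \<in> carrier BoolZ" using VC bb by blast
    then have "finite b'" by (simp add: BoolZ_def)
    then have ib: "inv\<^bsub>BoolZ\<^esub> b' = b'" by (rule inv_BoolZ)
    have "z \<in> U" unfolding z ib by (rule bu)
    then show "z \<in> cubeA" using U(3) by blast
  qed
  ultimately show False using part2 by blast
qed

end

theorem proposition5p4:
  shows "(\<forall>ms::int list. length ms \<ge> 2 \<and> (\<forall>m\<in>set ms. odd m) \<longrightarrow>
            ramsey_product_subset BoolZ ms cubeA)
       \<and> \<not> (\<exists>B. large_subset BoolZ B \<and>
              {b \<otimes>\<^bsub>BoolZ\<^esub> inv\<^bsub>BoolZ\<^esub> b' | b b'. b \<in> B \<and> b' \<in> B} \<subseteq> cubeA)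
       \<and> \<not> (\<exists>T. totally_bounded_group_topology BoolZ T \<and> nhd_of_identity BoolZ T cubeA)"
    using part1 part2 part3 by blast

end
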